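(* Let $d\geq 3$ and let $n$ be an integer with $n\not\equiv -1\pmod d$. (a) If $0\neq W\subset A^n$ is an additive subgroup stable under $\Gamma_n(d)$, then $W\supseteq\lambda A^n$ for some non-zero $\lambda\in A$; in particular $W$ has finite index in $A^n$. (b) If $F\supseteq A$ is a field and $W_F\subseteq F^n$ is a non-zero $F$-subspace stable under $\rho_n(d)(B_{n+1})$, then $W_F=F^n$.
   Context: $A=\mathbb{Z}[q,q^{-1}]/(\Phi_d(q))$, where $\Phi_d$ is the $d$-th cyclotomic polynomial. $\rho_n(d):B_{n+1}\to GL_n(A)$ is the reduced Burau representation reduced mod $\Phi_d(q)$. It sends the generator $s_j$ to $T_j$, where $T_j(e_j)=-qe_j$, $T_j(e_{j-1})=e_{j-1}+qe_j$, $T_j(e_{j+1})=e_{j+1}+e_j$, and $T_j(e_k)=e_k$ for $|k-j|\geq 2$, with $e_1,\dots,e_n$ the standard basis. $\Gamma_n(d)$ denotes the image of $\rho_n(d)$. *)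

theory Defs
  imports Complex_Main "HOL-Library.Cardinality" "HOL-Library.Function_Algebras" "HOL-Computational_Algebra.Polynomial" "HOL-Number_Theory.Cong"
begin

definition cyclotomic_C :: "nat \<Rightarrow> complex poly" where
  "cyclotomic_C d = (\<Prod>k\<in>{k\<in>{1..d}. coprime k d}. [:- cis (2 * pi * real k / real d), 1:])"

text \<open>The d-th cyclotomic polynomial as an integer polynomial (it has integer coefficients).\<close>
definition cyclotomic :: "nat \<Rightarrow> int poly" where
  "cyclotomic d = (THE p :: int poly. map_poly of_int p = cyclotomic_C d)"

text \<open>The parameter d is encoded as the cardinality of the (phantom) index type 'd.
  Since q is a unit modulo Phi_d (Phi_d divides q^d - 1), Z[q,q^-1]/(Phi_d) = Z[q]/(Phi_d).\<close>
definition cyc_rel :: "'d itself \<Rightarrow> int poly \<Rightarrow> int poly \<Rightarrow> bool" where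
  "cyc_rel _ p r \<longleftrightarrow> cyclotomic CARD('d) dvd (p - r)"

lemma cyc_rel_equivp: "equivp (cyc_rel TYPE('d))"
proof (rule equivpI)
  show "reflp (cyc_rel TYPE('d))" by (rule reflpI) (simp add: cyc_rel_def)
  show "symp (cyc_rel TYPE('d))"
    by (rule sympI) (metis cyc_rel_def dvd_minus_iff minus_diff_eq)
  show "transp (cyc_rel TYPE('d))"
    proof (rule transpI)
    fix x y z assume "cyc_rel TYPE('d) x y" "cyc_rel TYPE('d) y z"
    then have "cyclotomic CARD('d) dvd (x - y) + (y - z)" unfolding cyc_rel_def by (rule dvd_add)
    then show "cyc_rel TYPE('d) x z" unfolding cyc_rel_def by simp
  qed
qed

quotient_type 'd cyc = "int poly" / "cyc_rel TYPE('d)"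
  by (rule cyc_rel_equivp)

instantiation cyc :: (type) "{comm_ring, comm_monoid_mult}"
begin

lift_definition zero_cyc :: "'d cyc" is "0 :: int poly" .
lift_definition one_cyc :: "'d cyc" is "1 :: int poly" .
lift_definition plus_cyc :: "'d cyc \<Rightarrow> 'd cyc \<Rightarrow> 'd cyc" is "(+)"
  unfolding cyc_rel_def by (simp add: add_diff_add dvd_add)
lift_definition uminus_cyc :: "'d cyc \<Rightarrow> 'd cyc" is uminus
  unfolding cyc_rel_def by (metis dvd_minus_iff minus_diff_eq minus_diff_minus)
lift_definition minus_cyc :: "'d cyc \<Rightarrow> 'd cyc \<Rightarrow> 'd cyc" is "(-)"
  unfolding cyc_rel_def
proof -
  fix p1 p2 r1 r2 :: "int poly"
  assume "cyclotomic CARD('d) dvd p1 - p2" "cyclotomic CARD('d) dvd r1 - r2"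
  then have "cyclotomic CARD('d) dvd (p1 - p2) - (r1 - r2)" by (rule dvd_diff)
  then show "cyclotomic CARD('d) dvd (p1 - r1) - (p2 - r2)" by (simp add: algebra_simps)
qed
lift_definition times_cyc :: "'d cyc \<Rightarrow> 'd cyc \<Rightarrow> 'd cyc" is "(*)"
proof -
  fix p1 p2 r1 r2 :: "int poly"
  assume "cyc_rel TYPE('d) p1 p2" "cyc_rel TYPE('d) r1 r2"
  then have "cyclotomic CARD('d) dvd (p1 - p2) * r1 + p2 * (r1 - r2)"
    unfolding cyc_rel_def by (intro dvd_add dvd_mult2 dvd_mult)
  moreover have "(p1 - p2) * r1 + p2 * (r1 - r2) = p1 * r1 - p2 * r2"
    by (simp add: algebra_simps)
  ultimately show "cyc_rel TYPE('d) (p1 * r1) (p2 * r2)"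
    unfolding cyc_rel_def by simp
qed

instance
  by standard (transfer; simp add: cyc_rel_def algebra_simps)+

end

text \<open>Note: we do not instantiate comm_ring_1, since 0 ~= 1 fails for degenerate
  index types (e.g. CARD('d) = 0); all ring axioms other than 0 ~= 1 hold.\<close>

lift_definition cyc_q :: "'d cyc" is "[:0, 1:] :: int poly" .

text \<open>R^n is modelled as functions nat => R supported on the index set {1..n}
  (coordinates with respect to the standard basis e_1,...,e_n).\<close>
definition vecs :: "nat \<Rightarrow> (nat \<Rightarrow> 'a::zero) set" where
  "vecs n = {v. \<forall>k. k \<notin> {1..n} \<longrightarrow> v k = 0}"

text \<open>The matrix T_j (parameter q) acting on coordinate vectors:
  T_j(e_j) = -q e_j, T_j(e_(j-1)) = e_(j-1) + q e_j, T_j(e_(j+1)) = e_(j+1) + e_j,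
  T_j(e_k) = e_k otherwise.  Hence only the j-th coordinate changes, and
  (T_j v)_j = -q v_j + q v_(j-1) + v_(j+1) (with v_0 = v_(n+1) = 0 for v in vecs n).\<close>
definition burau_T :: "'a::comm_ring \<Rightarrow> nat \<Rightarrow> (nat \<Rightarrow> 'a) \<Rightarrow> (nat \<Rightarrow> 'a)" where
  "burau_T q j v = (\<lambda>k. if k = j then - q * v j + q * v (j - 1) + v (j + 1) else v k)"

text \<open>The image of B_(n+1) under the representation s_j |-> T_j (j = 1..n):
  the group of (bijective) maps of vecs n generated by the T_j, i.e. all finite
  products of the T_j and their inverses.\<close>
inductive_set burau_image :: "'a::comm_ring \<Rightarrow> nat \<Rightarrow> ((nat \<Rightarrow> 'a) \<Rightarrow> (nat \<Rightarrow> 'a)) set"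
  for q :: 'a and n :: nat where
  id: "id \<in> burau_image q n"
| gen: "g \<in> burau_image q n \<Longrightarrow> j \<in> {1..n} \<Longrightarrow> burau_T q j \<circ> g \<in> burau_image q n"
| gen_inv: "g \<in> burau_image q n \<Longrightarrow> j \<in> {1..n} \<Longrightarrow>
     inv_into (vecs n) (burau_T q j) \<circ> g \<in> burau_image q n"

definition stable :: "((nat \<Rightarrow> 'a) \<Rightarrow> (nat \<Rightarrow> 'a)) set \<Rightarrow> (nat \<Rightarrow> 'a) set \<Rightarrow> bool" where
  "stable G W \<longleftrightarrow> (\<forall>g\<in>G. \<forall>w\<in>W. g w \<in> W)"

definition add_subgroup :: "nat \<Rightarrow> (nat \<Rightarrow> 'a::ab_group_add) set \<Rightarrow> bool" where
  "add_subgroup n W \<longleftrightarrow> W \<subseteq> vecs n \<and> 0 \<in> W \<and> (\<forall>v\<in>W. \<forall>w\<in>W. v + w \<in> W) \<and> (\<forall>v\<in>W. - v \<in> W)"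

definition subspace_vecs :: "nat \<Rightarrow> (nat \<Rightarrow> 'a::field) set \<Rightarrow> bool" where
  "subspace_vecs n W \<longleftrightarrow> W \<subseteq> vecs n \<and> 0 \<in> W \<and> (\<forall>v\<in>W. \<forall>w\<in>W. v + w \<in> W) \<and>
     (\<forall>c. \<forall>v\<in>W. (\<lambda>k. c * v k) \<in> W)"

end

theory Submission
  imports Defs "HOL-Computational_Algebra.Polynomial_Factorial" "HOL-Library.FuncSet"
begin


section \<open>Integer polynomials mapped to complex\<close>

abbreviation ip :: "int poly \<Rightarrow> complex poly" where "ip \<equiv> map_poly of_int"

lemma ip_add [simp]: "ip (p + q) = ip p + ip q"
  by (intro poly_eqI) (simp_all add: coeff_map_poly)
lemma ip_diff [simp]: "ip (p - q) = ip p - ip q"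
  by (intro poly_eqI) (simp_all add: coeff_map_poly)
lemma ip_uminus [simp]: "ip (- p) = - ip p"
  by (intro poly_eqI) (simp_all add: coeff_map_poly)
lemma ip_mult [simp]: "ip (p * q) = ip p * ip q"
  by (intro poly_eqI) (simp_all add: coeff_map_poly coeff_mult)
lemma ip_1 [simp]: "ip 1 = 1" by simp
lemma ip_const [simp]: "ip [:a:] = [:of_int a:]" by (simp add: map_poly_pCons)
lemma ip_pCons [simp]: "ip (pCons a p) = pCons (of_int a) (ip p)" by (simp add: map_poly_pCons)
lemma ip_power [simp]: "ip (p ^ n) = ip p ^ n" by (induction n) simp_all
lemma ip_prod [simp]: "ip (prod f A) = (\<Prod>x\<in>A. ip (f x))"
  by (induction A rule: infinite_finite_induct) simp_all
lemma ip_monom [simp]: "ip (monom c n) = monom (of_int c) n" by (simp add: map_poly_monom)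
lemma ip_smult [simp]: "ip (smult c p) = smult (of_int c) (ip p)" by (simp add: map_poly_smult)
lemma ip_eq_iff [simp]: "ip p = ip q \<longleftrightarrow> p = q"
  by (auto simp: poly_eq_iff coeff_map_poly)
lemma ip_eq_0_iff [simp]: "ip p = 0 \<longleftrightarrow> p = 0"
  using ip_eq_iff[of p 0] by (simp del: ip_eq_iff)
lemma degree_ip [simp]: "degree (ip p) = degree p"
  by (rule degree_map_poly) simp
lemma lead_coeff_ip [simp]: "lead_coeff (ip p) = of_int (lead_coeff p)"
  by (simp add: coeff_map_poly)
lemma ip_pcompose [simp]: "ip (pcompose p q) = pcompose (ip p) (ip q)"
  by (induction p) (simp_all add: pcompose_pCons)

section \<open>Roots of unity\<close>

definition zeta :: "nat \<Rightarrow> nat \<Rightarrow> complex" where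
  "zeta d k = cis (2 * pi * real k / real d)"

lemma zeta_pow: "zeta d k ^ m = zeta d (k * m)"
  unfolding zeta_def DeMoivre by (simp add: algebra_simps)

lemma zeta_mod: assumes "d > 0" shows "zeta d k = zeta d (k mod d)"
proof -
  have k: "k = (k div d) * d + k mod d" by simp
  have rk: "real k = real (k div d) * real d + real (k mod d)"
    by (metis k of_nat_add of_nat_mult)
  have "2 * pi * real k / real d = 2 * pi * real (k div d) + 2 * pi * real (k mod d) / real d"
    using assms by (subst rk) (simp add: field_simps)
  then have "zeta d k = cis (2 * pi * real (k div d)) * zeta d (k mod d)"
    unfolding zeta_def by (simp only: cis_mult)
  also have "cis (2 * pi * real (k div d)) = 1"
    by (rule cis_multiple_2pi) (simp add: Ints_of_nat)
  finally show ?thesis by simp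
qed

lemma zeta_eq_iff: assumes "d > 0" shows "zeta d k = zeta d l \<longleftrightarrow> k mod d = l mod d"
proof
  assume "zeta d k = zeta d l"
  then have "zeta d (k mod d) = zeta d (l mod d)" using zeta_mod[OF assms] by metis
  moreover have "inj_on (\<lambda>k. cis (2 * pi * real k / real d)) {..<d}"
    using bij_betw_roots_unity[OF assms] by (simp add: bij_betw_def)
  ultimately show "k mod d = l mod d"
    unfolding zeta_def inj_on_def using assms by auto
next
  assume "k mod d = l mod d"
  then show "zeta d k = zeta d l" using zeta_mod[OF assms] by metis
qed

lemma zeta_0 [simp]: "zeta d 0 = 1" by (simp add: zeta_def)

lemma zeta_eq_1_iff: assumes "d > 0" shows "zeta d k = 1 \<longleftrightarrow> d dvd k"
  using zeta_eq_iff[OF assms, of k 0] by (simp add: dvd_eq_mod_eq_0)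

lemma zeta_scale: assumes "m > 0" shows "zeta (e * m) (j * m) = zeta e j"
  using assms unfolding zeta_def by (simp add: field_simps)

lemma prod_roots_dvd:
  fixes p :: "'a::idom poly"
  assumes "finite S" "\<forall>a\<in>S. poly p a = 0"
  shows "(\<Prod>a\<in>S. [:-a, 1:]) dvd p"
  using assms
proof (induction S arbitrary: p rule: finite_induct)
  case empty then show ?case by simp
next
  case (insert a S)
  then have "poly p a = 0" by simp
  then obtain p1 where p1: "p = [:-a, 1:] * p1" using poly_eq_0_iff_dvd by (metis dvdE)
  have "\<forall>b\<in>S. poly p1 b = 0"
  proof
    fix b assume "b \<in> S"
    then have "b \<noteq> a" "poly p b = 0" using insert by auto
    then show "poly p1 b = 0" using p1 by simp
  qed
  then have "(\<Prod>a\<in>S. [:-a, 1:]) dvd p1" using insert.IH by blast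
  then have "[:-a, 1:] * (\<Prod>a\<in>S. [:-a, 1:]) dvd [:-a, 1:] * p1"
    by (rule mult_dvd_mono[OF dvd_refl])
  moreover have "(\<Prod>a\<in>insert a S. [:-a, 1:]) = [:-a,1:] * (\<Prod>a\<in>S. [:-a, 1:])"
    using insert.hyps by (rule prod.insert)
  ultimately show ?case using p1 by simp
qed

lemma lin_prod_lead [simp]: "lead_coeff (\<Prod>a\<in>S. [:-f a, 1::'a::idom:]) = 1"
  by (simp add: lead_coeff_prod)

lemma lin_prod_degree: "finite S \<Longrightarrow> degree (\<Prod>a\<in>S. [:-f a, 1::'a::idom:]) = card S"
  by (subst degree_prod_eq_sum_degree) auto

lemma monic_dvd_eq:
  fixes p q :: "'a::idom poly"
  assumes "p dvd q" "lead_coeff p = 1" "lead_coeff q = 1" "degree p = degree q"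
  shows "p = q"
proof -
  obtain r where r: "q = p * r" using assms(1) by (rule dvdE)
  have "q \<noteq> 0" using assms(3) by auto
  then have "p \<noteq> 0" "r \<noteq> 0" using r by auto
  then have "degree r = 0" using r assms(4) degree_mult_eq by fastforce
  then obtain c where c: "r = [:c:]" by (metis degree_eq_zeroE)
  have "lead_coeff q = lead_coeff p * c" using r c by (simp add: lead_coeff_mult)
  then have "c = 1" using assms by simp
  then show ?thesis using r c by simp
qed


definition Xm1 :: "nat \<Rightarrow> 'a::comm_ring_1 poly" where "Xm1 d = monom 1 d - 1"

lemma ip_Xm1 [simp]: "ip (Xm1 d) = Xm1 d" by (simp add: Xm1_def)

lemma Xm1_degree: assumes "d > 0" shows "degree (Xm1 d :: 'a::{comm_ring_1,ring_char_0} poly) = d"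
proof -
  have "degree (monom (1::'a) d + (- 1)) = degree (monom (1::'a) d)"
    by (rule degree_add_eq_left) (use assms in \<open>simp add: degree_monom_eq\<close>)
  then show ?thesis unfolding Xm1_def by (simp add: degree_monom_eq)
qed

lemma Xm1_lead: assumes "d > 0" shows "lead_coeff (Xm1 d :: 'a::{comm_ring_1,ring_char_0} poly) = 1"
  using assms by (simp add: Xm1_degree) (simp add: Xm1_def coeff_monom)

lemma poly_Xm1 [simp]: "poly (Xm1 d) x = x ^ d - 1"
  by (simp add: Xm1_def poly_monom)

lemma div_gcd_dvd: "(d::nat) div gcd k d dvd d"
  by (metis dvd_div_mult_self dvd_triv_left gcd_dvd2)

lemma Xm1_coeff: "d > 0 \<Longrightarrow> coeff (Xm1 d) d = 1"
  by (simp add: Xm1_def coeff_monom)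

lemma zeta_inj_1d: assumes "d > 0" shows "inj_on (zeta d) {1..d}"
proof (rule inj_onI)
  fix k l assume kl: "k \<in> {1..d}" "l \<in> {1..d}" "zeta d k = zeta d l"
  then have "k mod d = l mod d" using zeta_eq_iff[OF assms] by blast
  then show "k = l" using kl
    by (metis atLeastAtMost_iff le_neq_implies_less mod_less mod_self nat_neq_iff
        not_one_le_zero)
qed

lemma Xm1_prod: assumes "d > 0"
  shows "Xm1 d = (\<Prod>k\<in>{1..d}. [:- zeta d k, 1:])"
proof -
  have eq: "(\<Prod>k\<in>{1..d}. [:- zeta d k, 1:]) = (\<Prod>a\<in>zeta d ` {1..d}. [:- a, 1:])"
    using prod.reindex[OF zeta_inj_1d[OF assms], of "\<lambda>a. [:- a, 1:]"] by simp
  have "(\<Prod>a\<in>zeta d ` {1..d}. [:- a, 1:]) dvd Xm1 d"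
  proof (rule prod_roots_dvd)
    show "\<forall>a\<in>zeta d ` {1..d}. poly (Xm1 d) a = 0"
      using assms by (auto simp: zeta_pow zeta_eq_1_iff)
  qed simp
  moreover have "degree (\<Prod>a\<in>zeta d ` {1..d}. [:- a, 1:]) = d"
    using lin_prod_degree[of "zeta d ` {1..d}" "\<lambda>a. a"] card_image[OF zeta_inj_1d[OF assms]]
    by simp
  ultimately show ?thesis unfolding eq
    using assms by (intro monic_dvd_eq[symmetric, OF _ lin_prod_lead[of "\<lambda>a. a" "zeta d ` {1..d}"]]) (simp_all add: Xm1_degree Xm1_lead Xm1_coeff)
qed

lemma cycC_zeta: "cyclotomic_C d = (\<Prod>k\<in>{k\<in>{1..d}. coprime k d}. [:- zeta d k, 1:])"
  unfolding cyclotomic_C_def zeta_def ..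

lemma cycC_lead [simp]: "lead_coeff (cyclotomic_C d) = 1"
  unfolding cycC_zeta by (rule lin_prod_lead)

lemma group_bij:
  fixes d e :: nat
  assumes "e dvd d" "d > 0"
  shows "bij_betw (\<lambda>j. j * (d div e)) {j\<in>{1..e}. coprime j e} {k\<in>{1..d}. d div gcd k d = e}"
proof -
  obtain m where dm: "d = e * m" using assms(1) by blast
  have "e \<noteq> 0" "m \<noteq> 0" using assms(2) dm by auto
  then have e0: "e > 0" and m0: "m > 0" by auto
  have dme: "d div e = m" using dm e0 by simp
  show ?thesis unfolding dme
  proof (rule bij_betw_imageI)
    show "inj_on (\<lambda>j. j * m) {j \<in> {1..e}. coprime j e}"
      using m0 by (auto simp: inj_on_def)
    show "(\<lambda>j. j * m) ` {j \<in> {1..e}. coprime j e} = {k \<in> {1..d}. d div gcd k d = e}"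
    proof (intro equalityI subsetI)
      fix x assume "x \<in> (\<lambda>j. j * m) ` {j \<in> {1..e}. coprime j e}"
      then obtain j where j: "j \<in> {1..e}" "coprime j e" and xj: "x = j * m" by blast
      have "j * m \<in> {1..d}" using j m0 dm by auto
      moreover have "gcd (j * m) d = m * gcd j e"
        unfolding dm by (metis gcd_mult_distrib_nat mult.commute)
      then have "d div gcd (j * m) d = e" using j m0 dm by simp
      ultimately show "x \<in> {k \<in> {1..d}. d div gcd k d = e}" using xj by blast
    next
      fix k assume "k \<in> {k \<in> {1..d}. d div gcd k d = e}"
      then have k: "k \<in> {1..d}" "d div gcd k d = e" by auto
      obtain g where g_def: "g = gcd k d" by blast
      have g0: "g > 0" using k by (simp add: g_def)
      have dg: "d = e * g" using k unfolding g_def by (metis dvd_div_mult_self gcd_dvd2)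
      then have gm: "g = m" using dm e0 by simp
      have "g dvd k" unfolding g_def by simp
      then obtain j where kj: "k = g * j" by (rule dvdE)
      have "gcd (g * j) (g * e) = g * gcd j e" by (rule gcd_mult_distrib_nat[symmetric])
      moreover have "gcd (g * j) (g * e) = g" using g_def kj dg by (simp add: mult.commute)
      ultimately have "g * gcd j e = g * 1" by (metis mult_1_right)
      then have "gcd j e = 1" using mult_left_cancel[of g "gcd j e" 1] g0 by linarith
      moreover have "j \<ge> 1" using k kj by (cases j) auto
      moreover have "j \<le> e" using k kj dg g0 by (simp add: mult.commute)
      ultimately show "k \<in> (\<lambda>j. j * m) ` {j \<in> {1..e}. coprime j e}"
        using kj gm by (auto simp: coprime_iff_gcd_eq_1 mult.commute)
    qed
  qed
qed

lemma cycC_group: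
  fixes d e :: nat
  assumes "e dvd d" "d > 0"
  shows "(\<Prod>k\<in>{k\<in>{1..d}. d div gcd k d = e}. [:- zeta d k, 1:]) = cyclotomic_C e"
proof -
  obtain m where dm: "d = e * m" using assms(1) by blast
  have "e \<noteq> 0" "m \<noteq> 0" using assms(2) dm by auto
  then have e0: "e > 0" and m0: "m > 0" by auto
  have dme: "d div e = m" using dm e0 by simp
  have "(\<Prod>k\<in>{k\<in>{1..d}. d div gcd k d = e}. [:- zeta d k, 1:])
      = (\<Prod>j\<in>{j\<in>{1..e}. coprime j e}. [:- zeta d (j * (d div e)), 1:])"
    using prod.reindex_bij_betw[OF group_bij[OF assms], of "\<lambda>k. [:- zeta d k, 1:]"] by simp
  also have "\<dots> = cyclotomic_C e"
    unfolding cycC_zeta dme dm using zeta_scale[OF m0] by simp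
  finally show ?thesis .
qed

lemma Xm1_cyc_prod: assumes "d > 0"
  shows "Xm1 d = (\<Prod>e\<in>{e. e dvd d}. cyclotomic_C e)"
proof -
  have "Xm1 d = (\<Prod>k\<in>{1..d}. [:- zeta d k, 1:])" by (rule Xm1_prod[OF assms])
  also have "\<dots> = (\<Prod>e\<in>{e. e dvd d}. \<Prod>k\<in>{k\<in>{1..d}. d div gcd k d = e}. [:- zeta d k, 1:])"
    by (rule prod.group[symmetric]) (use assms div_gcd_dvd in auto)
  also have "\<dots> = (\<Prod>e\<in>{e. e dvd d}. cyclotomic_C e)"
    by (rule prod.cong) (use cycC_group assms in auto)
  finally show ?thesis .
qed


lemma monic_div:
  fixes f g :: "int poly"
  assumes "lead_coeff g = 1"
  shows "\<exists>q r. f = g * q + r \<and> (r = 0 \<or> degree r < degree g)"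
proof -
  have g0: "g \<noteq> 0" using assms by auto
  obtain q r where qr: "pseudo_divmod f g = (q, r)" by fastforce
  from pseudo_divmod[OF g0 qr] assms show ?thesis by auto
qed

lemma cyc_exists:
  "d > 0 \<Longrightarrow> \<exists>p. ip p = cyclotomic_C d \<and> lead_coeff p = 1 \<and> p dvd Xm1 d"
proof (induction d rule: less_induct)
  case (less d)
  define E where "E = {e. e dvd d \<and> e < d}"
  have finE: "finite E" unfolding E_def by auto
  have "\<forall>e\<in>E. \<exists>p. ip p = cyclotomic_C e \<and> lead_coeff p = 1"
  proof
    fix e assume "e \<in> E"
    then have "e < d" "e > 0" using less.prems unfolding E_def by (auto intro: Nat.gr0I)
    then show "\<exists>p. ip p = cyclotomic_C e \<and> lead_coeff p = 1" using less.IH by blast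
  qed
  then obtain P where P: "\<And>e. e \<in> E \<Longrightarrow> ip (P e) = cyclotomic_C e \<and> lead_coeff (P e) = 1"
    by metis
  define Q where "Q = prod P E"
  have ipQ: "ip Q = (\<Prod>e\<in>E. cyclotomic_C e)" unfolding Q_def using P by simp
  have lQ: "lead_coeff Q = 1" unfolding Q_def lead_coeff_prod using P by simp
  have set: "{e. e dvd d} = insert d E" "d \<notin> E" unfolding E_def using less.prems
    by (auto dest: dvd_imp_le)
  have "ip (Xm1 d) = cyclotomic_C d * ip Q"
    using Xm1_cyc_prod[OF less.prems] unfolding ipQ set(1) using set(2) finE by simp
  obtain S R where SR: "Xm1 d = Q * S + R" "R = 0 \<or> degree R < degree Q"
    using monic_div[OF lQ] by blast
  have e1: "cyclotomic_C d * ip Q = ip Q * ip S + ip R"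
    using \<open>ip (Xm1 d) = cyclotomic_C d * ip Q\<close> SR(1) by (metis ip_add ip_mult)
  have eq: "ip Q * (cyclotomic_C d - ip S) = ip R"
    using e1 by (simp add: algebra_simps)
  have Q0: "ip Q \<noteq> 0" using lQ by auto
  have cS: "cyclotomic_C d = ip S"
  proof (rule ccontr)
    assume "cyclotomic_C d \<noteq> ip S"
    then have x0: "cyclotomic_C d - ip S \<noteq> 0" by simp
    then have "ip R \<noteq> 0" using eq Q0 by (metis mult_eq_0_iff)
    then have "degree R < degree Q" using SR(2) by auto
    moreover have "degree (ip R) = degree Q + degree (cyclotomic_C d - ip S)"
      unfolding eq[symmetric] using Q0 x0 by (simp add: degree_mult_eq)
    ultimately show False by simp
  qed
  then have "R = 0" using eq by simp
  then have "S dvd Xm1 d" using SR(1) by simp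
  moreover have "lead_coeff S = 1"
  proof -
    have "of_int (lead_coeff S) = (1::complex)" using cS[symmetric] lead_coeff_ip[of S] by simp
    then show ?thesis by (metis of_int_eq_1_iff)
  qed
  ultimately show ?case using cS by (intro exI[of _ S] conjI) auto
qed

lemma ip_inj_ex1: assumes "d > 0" shows "\<exists>!p. ip p = cyclotomic_C d"
proof -
  obtain p where p: "ip p = cyclotomic_C d" using cyc_exists[OF assms] by blast
  show ?thesis
  proof (rule ex1I[of _ p])
    show "ip p = cyclotomic_C d" by (fact p)
    fix q assume "ip q = cyclotomic_C d"
    then have "ip q = ip p" using p by simp
    then show "q = p" by (simp only: ip_eq_iff)
  qed
qed

lemma cyclotomic_ip: "d > 0 \<Longrightarrow> ip (cyclotomic d) = cyclotomic_C d"
  unfolding cyclotomic_def by (rule theI'[OF ip_inj_ex1])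

lemma cyclotomic_props:
  assumes "d > 0"
  shows "lead_coeff (cyclotomic d) = 1" "cyclotomic d dvd Xm1 d"
proof -
  obtain p where p: "ip p = cyclotomic_C d" "lead_coeff p = 1" "p dvd Xm1 d"
    using cyc_exists[OF assms] by blast
  then have "ip (cyclotomic d) = ip p" using cyclotomic_ip[OF assms] by simp
  then have "cyclotomic d = p" by (simp only: ip_eq_iff)
  then show "lead_coeff (cyclotomic d) = 1" "cyclotomic d dvd Xm1 d" using p by auto
qed

lemma cyclotomic_degree:
  assumes "d > 0"
  shows "degree (cyclotomic d) = card {k\<in>{1..d}. coprime k d}" "degree (cyclotomic d) > 0"
proof -
  have "degree (cyclotomic d) = degree (cyclotomic_C d)"
    using cyclotomic_ip[OF assms] degree_ip by metis
  also have "\<dots> = card {k\<in>{1..d}. coprime k d}"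
    unfolding cycC_zeta by (rule lin_prod_degree) simp
  finally show "degree (cyclotomic d) = card {k\<in>{1..d}. coprime k d}" .
  moreover have "1 \<in> {k\<in>{1..d}. coprime k d}" using assms by auto
  moreover have "finite {k\<in>{1..d}. coprime k d}" by simp
  ultimately show "degree (cyclotomic d) > 0"
    by (metis card_gt_0_iff empty_iff)
qed

lemma cyclotomic_root:
  assumes "d > 0" "coprime k d"
  shows "poly (ip (cyclotomic d)) (zeta d k) = 0"
proof -
  define k' where "k' = (if k mod d = 0 then d else k mod d)"
  have "k' \<in> {k\<in>{1..d}. coprime k d}"
  proof (cases "k mod d = 0")
    case True
    then have "d dvd k" by auto
    then have "d = 1" using coprime_common_divisor[OF assms(2) \<open>d dvd k\<close> dvd_refl] by simp
    then show ?thesis unfolding k'_def by simp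
  next
    case False
    then show ?thesis unfolding k'_def using assms
      by (auto simp: coprime_mod_left_iff)
  qed
  moreover have "zeta d k' = zeta d k"
    using assms(1) unfolding k'_def by (auto simp: zeta_eq_iff)
  ultimately show ?thesis
    unfolding cyclotomic_ip[OF assms(1)] cycC_zeta poly_prod
    by (intro prod_zero) (auto intro!: bexI[of _ k'])
qed


lemma primitive_dvd_smult:
  fixes f h :: "int poly"
  assumes "content f = 1" "f dvd smult a h" "a \<noteq> 0"
  shows "f dvd h"
proof -
  have "fract_poly f dvd smult (to_fract a) (fract_poly h)"
    using fract_poly_dvd[OF assms(2)] by simp
  then have "fract_poly f dvd fract_poly h"
    using assms(3) by (simp add: dvd_smult_cancel)
  then show ?thesis using fract_poly_dvdD assms(1) by blast
qed

subsection \<open>Minimal polynomials\<close>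

lemma min_key:
  fixes f :: "int poly" and z :: complex
  assumes c1: "content f = 1" and r: "poly (ip f) z = 0" and f0: "f \<noteq> 0"
    and minimal: "\<And>h. h \<noteq> 0 \<Longrightarrow> poly (ip h) z = 0 \<Longrightarrow> degree f \<le> degree h"
    and h: "poly (ip h) z = 0"
  shows "f dvd h"
proof -
  define r0 where "r0 = pseudo_mod h f"
  obtain a q where aq: "a \<noteq> 0" "smult a h = f * q + r0"
    using pseudo_mod(1)[OF f0, of h] unfolding r0_def by blast
  have rd: "r0 = 0 \<or> degree r0 < degree f"
    using pseudo_mod(2)[OF f0, of h] unfolding r0_def by blast
  have "poly (ip (smult a h)) z = poly (ip (f * q + r0)) z" using aq by simp
  then have "poly (ip r0) z = 0" using r h by simp
  then have "r0 = 0" using rd minimal by fastforce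
  then have "f dvd smult a h" using aq by simp
  then show ?thesis using primitive_dvd_smult c1 aq(1) by blast
qed

definition minprop :: "nat \<Rightarrow> nat \<Rightarrow> int poly \<Rightarrow> bool" where
  "minprop d k f \<longleftrightarrow> lead_coeff f = 1 \<and> poly (ip f) (zeta d k) = 0 \<and>
     (\<forall>h. poly (ip h) (zeta d k) = 0 \<longrightarrow> f dvd h)"

lemma min_poly_exists:
  assumes d: "d > 0" and k: "coprime k d"
  shows "\<exists>f. minprop d k f"
proof -
  define z where "z = zeta d k"
  define P where "P h \<longleftrightarrow> h \<noteq> 0 \<and> poly (ip h) z = 0" for h
  have PC: "P (cyclotomic d)" unfolding P_def z_def
    using cyclotomic_root[OF d k] cyclotomic_props(1)[OF d] by auto
  obtain f0 where f0: "P f0" "\<And>h. P h \<Longrightarrow> degree f0 \<le> degree h"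
    using ex_has_least_nat[of P "cyclotomic d" degree, OF PC] by blast
  define f1 where "f1 = primitive_part f0"
  have nz: "f0 \<noteq> 0" using f0 unfolding P_def by simp
  have c1: "content f1 = 1" unfolding f1_def using nz by simp
  have dg: "degree f1 = degree f0" unfolding f1_def by simp
  have f1nz: "f1 \<noteq> 0" using nz unfolding f1_def by simp
  have "smult (content f0) f1 = f0" unfolding f1_def by (rule content_times_primitive_part)
  then have "ip f0 = smult (of_int (content f0)) (ip f1)" by (metis ip_smult)
  moreover have "content f0 \<noteq> 0" using nz by simp
  ultimately have r1: "poly (ip f1) z = 0" using f0(1) unfolding P_def by auto
  have key: "\<And>h. poly (ip h) z = 0 \<Longrightarrow> f1 dvd h"
    by (rule min_key[OF c1 r1 f1nz]) (use f0(2) dg P_def in auto)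
  have "f1 dvd cyclotomic d" using key PC unfolding P_def by blast
  then obtain g where g: "cyclotomic d = f1 * g" by (rule dvdE)
  have "lead_coeff f1 * lead_coeff g = 1"
    using cyclotomic_props(1)[OF d] g by (simp add: lead_coeff_mult)
  then have "lead_coeff f1 = 1 \<or> lead_coeff f1 = -1" using zmult_eq_1_iff by blast
  then show ?thesis
  proof
    assume "lead_coeff f1 = 1"
    then show ?thesis using key r1 unfolding minprop_def z_def by blast
  next
    assume "lead_coeff f1 = -1"
    then have "minprop d k (- f1)" using key r1 unfolding minprop_def z_def by simp
    then show ?thesis by blast
  qed
qed

subsection \<open>Frobenius\<close>

lemma binom_p:
  fixes x y :: "'a::comm_ring_1"
  assumes p: "prime p"
  shows "\<exists>t. (x + y) ^ p = x ^ p + y ^ p + of_nat p * t"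
proof -
  have p2: "p \<ge> 2" using p by (simp add: prime_ge_2_nat)
  define T where "T = (\<Sum>k\<in>{1..p-1}. of_nat ((p choose k) div p) * x ^ k * y ^ (p - k))"
  have "(x + y) ^ p = (\<Sum>k\<le>p. of_nat (p choose k) * x ^ k * y ^ (p - k))"
    by (rule binomial_ring)
  also have "{..p} = insert 0 (insert p {1..p-1})" using p2 by auto
  also have "(\<Sum>k\<in>insert 0 (insert p {1..p-1}). of_nat (p choose k) * x ^ k * y ^ (p - k))
      = y ^ p + (x ^ p + (\<Sum>k\<in>{1..p-1}. of_nat (p choose k) * x ^ k * y ^ (p - k)))"
    using p2 by (simp add: sum.insert)
  also have "(\<Sum>k\<in>{1..p-1}. of_nat (p choose k) * x ^ k * y ^ (p - k)) = of_nat p * T"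
    unfolding sum_distrib_left T_def
  proof (rule sum.cong[OF refl])
    fix k assume "k \<in> {1..p-1}"
    then have "p dvd (p choose k)" using p by (intro dvd_choose_prime) auto
    then have "(p choose k) = p * ((p choose k) div p)" by simp
    then have "(of_nat (p choose k) :: 'a) = of_nat p * of_nat ((p choose k) div p)"
      by (metis of_nat_mult)
    then show "of_nat (p choose k) * x ^ k * y ^ (p - k) =
        of_nat p * (of_nat ((p choose k) div p) * x ^ k * y ^ (p - k))"
      by (simp add: mult.assoc)
  qed
  finally have eq: "(x + y) ^ p = y ^ p + (x ^ p + of_nat p * T)" .
  show ?thesis by (rule exI[of _ T]) (simp add: eq algebra_simps)
qed

lemma fermat_nat_int:
  assumes p: "prime p"
  shows "int p dvd int a ^ p - int a"
proof (induction a)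
  case 0 then show ?case using p by (simp add: prime_gt_0_nat power_0_left)
next
  case (Suc a)
  obtain t :: int where t: "(int a + 1) ^ p = int a ^ p + 1 ^ p + of_nat p * t"
    using binom_p[OF p] by blast
  have "int (Suc a) ^ p - int (Suc a) = (int a + 1) ^ p - (int a + 1)" by (simp add: add.commute)
  also have "\<dots> = int a ^ p + 1 + int p * t - (int a + 1)" using t by simp
  also have "\<dots> = (int a ^ p - int a) + int p * t" by simp
  finally have eq: "int (Suc a) ^ p - int (Suc a) = (int a ^ p - int a) + int p * t" .
  show ?case unfolding eq using Suc by simp
qed

lemma diff_dvd_power_diff:
  fixes x y :: "'a::comm_ring_1"
  shows "(x - y) dvd (x ^ n - y ^ n)"
proof (induction n)
  case 0 then show ?case by simp
next
  case (Suc n)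
  have "x ^ Suc n - y ^ Suc n = x * (x ^ n - y ^ n) + (x - y) * y ^ n"
    by (simp add: algebra_simps)
  then show ?case using Suc by (simp add: dvd_add dvd_mult)
qed

lemma fermat_int:
  assumes p: "prime p"
  shows "int p dvd a ^ p - a"
proof -
  have pp: "int p > 0" using p by (simp add: prime_gt_0_nat)
  define r where "r = a mod int p"
  have r0: "r \<ge> 0" using pp unfolding r_def by simp
  have d1: "int p dvd a - r" unfolding r_def by (simp add: minus_mod_eq_mult_div)
  have d2: "int p dvd a ^ p - r ^ p"
    using dvd_trans[OF d1 diff_dvd_power_diff] .
  have d3: "int p dvd r ^ p - r"
    using fermat_nat_int[OF p, of "nat r"] r0 by simp
  have "a ^ p - a = (a ^ p - r ^ p) + (r ^ p - r) - (a - r)" by simp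
  then show ?thesis using d1 d2 d3 by (metis dvd_add dvd_diff)
qed

lemma frobenius:
  fixes g :: "int poly"
  assumes p: "prime p"
  shows "\<exists>t. g ^ p = pcompose g (monom 1 p) + smult (int p) t"
proof (induction g)
  case 0
  have "p > 0" using p by (simp add: prime_gt_0_nat)
  then show ?case by (intro exI[of _ 0]) (simp add: power_0_left)
next
  case (pCons a g1)
  obtain t1 where t1: "g1 ^ p = pcompose g1 (monom 1 p) + smult (int p) t1"
    using pCons.IH by blast
  obtain t2 where t2: "([:a:] + [:0,1:] * g1) ^ p = [:a:] ^ p + ([:0,1:] * g1) ^ p + of_nat p * t2"
    using binom_p[OF p] by blast
  obtain s where s: "a ^ p - a = int p * s" using fermat_int[OF p, of a] by (elim dvdE)
  have pc: "pCons a g1 = [:a:] + [:0,1:] * g1" by (simp add: mult_pCons_left)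
  have xp: "[:0,1:] ^ p = (monom 1 p :: int poly)" by (simp add: monom_altdef)
  have ca: "[:a:] ^ p = [:a:] + smult (int p) [:s:]"
    using s by (simp add: poly_const_pow algebra_simps)
  have "pCons a g1 ^ p = [:a:] + smult (int p) [:s:] + monom 1 p * (pcompose g1 (monom 1 p) + smult (int p) t1) + smult (int p) t2"
    unfolding pc t2 ca power_mult_distrib xp t1 by (simp add: of_nat_mult_conv_smult)
  also have "\<dots> = pcompose (pCons a g1) (monom 1 p) + smult (int p) ([:s:] + monom 1 p * t1 + t2)"
    by (simp add: pcompose_pCons smult_add_right distrib_left add_ac)
  finally show ?case by blast
qed


lemma no_unit_mod_p:
  fixes f A B :: "int poly" and p :: int
  assumes lf: "lead_coeff f = 1" and df: "degree f > 0" and p2: "p \<ge> 2"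
  shows "f * A + smult p B \<noteq> 1"
proof (induction "if A = 0 then 0 else Suc (degree A)" arbitrary: A B rule: less_induct)
  case less
  show ?case
  proof (cases "A = 0")
    case True
    show ?thesis
    proof
      assume "f * A + smult p B = 1"
      then have "smult p B = 1" using True by simp
      then have "coeff (smult p B) 0 = coeff (1::int poly) 0" by simp
      then have "p * coeff B 0 = 1" by simp
      then show False using p2 by (auto simp: zmult_eq_1_iff)
    qed
  next
    case A0: False
    define a where "a = lead_coeff A"
    define m where "m = degree A"
    show ?thesis
    proof (cases "p dvd a")
      case True
      then obtain a' where a': "a = p * a'" by (elim dvdE)
      define A' where "A' = A - monom a m"
      have cA': "coeff A' n = 0" if "n \<ge> m" for n
        using that unfolding A'_def a_def m_def
        by (cases "n = degree A") (auto simp: coeff_monom coeff_eq_0)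
      have mu: "(if A' = 0 then 0 else Suc (degree A')) < (if A = 0 then 0 else Suc (degree A))"
      proof (cases "A' = 0")
        case True then show ?thesis using A0 by simp
      next
        case False
        have "m > 0"
        proof (rule ccontr)
          assume "\<not> m > 0"
          then have "\<forall>n. coeff A' n = 0" using cA' by simp
          then have "A' = 0" by (simp add: poly_eq_iff)
          then show False using False by simp
        qed
        then have "degree A' \<le> m - 1" using cA' by (intro degree_le) auto
        then show ?thesis using A0 False \<open>m > 0\<close> unfolding m_def by simp
      qed
      have e1: "monom a m = smult p (monom a' m)" unfolding a' by (simp add: smult_monom)
      have "f * A + smult p B = f * A' + f * monom a m + smult p B"
        unfolding A'_def by (simp add: algebra_simps)
      also have "\<dots> = f * A' + smult p (B + f * monom a' m)"
        unfolding e1 by (simp add: smult_add_right mult_smult_right)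
      finally have "f * A + smult p B = f * A' + smult p (B + f * monom a' m)" .
      moreover have "f * A' + smult p (B + f * monom a' m) \<noteq> 1" using less.hyps[OF mu] .
      ultimately show ?thesis by simp
    next
      case False
      show ?thesis
      proof
        assume eq: "f * A + smult p B = 1"
        have "coeff (f * A) (degree f + m) = a" unfolding m_def a_def
          using coeff_mult_degree_sum[of f A] lf by simp
        moreover have "coeff (1::int poly) (degree f + m) = 0" using df by simp
        ultimately have "a + p * coeff B (degree f + m) = 0"
          using arg_cong[OF eq, of "\<lambda>q. coeff q (degree f + m)"] by simp
        then have "a = p * (- coeff B (degree f + m))" by (simp add: algebra_simps)
        then have "p dvd a" by (rule dvdI)
        then show False using False by simp
      qed
    qed
  qed
qed

lemma pow_add_mult:
  fixes a f v :: "'a::comm_ring_1"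
  shows "\<exists>w. (a + f * v) ^ n = a ^ n + f * w"
proof (induction n)
  case 0 then show ?case by (intro exI[of _ 0]) simp
next
  case (Suc n)
  then obtain w where w: "(a + f * v) ^ n = a ^ n + f * w" by blast
  have "(a + f * v) ^ Suc n = (a + f * v) * (a ^ n + f * w)" using w by simp
  also have "\<dots> = a ^ Suc n + f * (a * w + v * a ^ n + f * v * w)" by (simp add: algebra_simps)
  finally show ?case by blast
qed

lemma deriv_identity:
  assumes "d > 0"
  shows "[:0, 1:] * pderiv (Xm1 d) - smult (int d) (Xm1 d) = [:int d:]"
proof -
  obtain n where n: "d = Suc n" using assms by (cases d) auto
  have "pderiv (Xm1 d :: int poly) = monom (int d) n"
    unfolding Xm1_def n by (simp add: pderiv_diff pderiv_monom)
  moreover have "[:0, 1:] * monom (int d) n = monom (int d) d"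
    unfolding n by (simp add: monom_Suc mult_pCons_left)
  moreover have "smult (int d) (Xm1 d) = monom (int d) d - [:int d:]"
    unfolding Xm1_def by (simp add: smult_diff_right smult_monom)
  ultimately show ?thesis by simp
qed

lemma minprop_degree:
  assumes "minprop d k f" shows "degree f > 0"
proof (rule ccontr)
  assume "\<not> degree f > 0"
  then have "degree f = 0" by simp
  then have "f = [:lead_coeff f:]" by (metis degree_eq_zeroE coeff_pCons_0)
  then have "f = 1" using assms unfolding minprop_def by (simp add: one_pCons)
  then show False using assms unfolding minprop_def by simp
qed

lemma frob_root:
  assumes d: "d > 0" and k: "coprime k d" and p: "prime p" and pd: "\<not> p dvd d"
    and mf: "minprop d k f"
  shows "poly (ip f) (zeta d (k * p)) = 0"
proof (rule ccontr)
  assume nz: "poly (ip f) (zeta d (k * p)) \<noteq> 0"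
  define z where "z = zeta d k"
  have lf: "lead_coeff f = 1" and fdvd: "\<And>h. poly (ip h) z = 0 \<Longrightarrow> f dvd h"
    using mf unfolding minprop_def z_def by auto
  have "f dvd cyclotomic d" using fdvd cyclotomic_root[OF d k] unfolding z_def by blast
  then obtain g where g: "cyclotomic d = f * g" by (rule dvdE)
  have "coprime p d" using p pd by (rule prime_imp_coprime)
  then have kp: "coprime (k * p) d" using k by simp
  have "poly (ip f) (zeta d (k * p)) * poly (ip g) (zeta d (k * p)) = 0"
    using cyclotomic_root[OF d kp] unfolding g by simp
  then have g0: "poly (ip g) (zeta d (k * p)) = 0" using nz by simp
  define G where "G = pcompose g (monom 1 p)"
  have "poly (ip G) z = 0"
    unfolding G_def z_def by (simp add: poly_pcompose poly_monom zeta_pow g0)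
  then obtain s0 where s0: "G = f * s0" using fdvd by (blast elim: dvdE)
  obtain t where t: "g ^ p = G + smult (int p) t" using frobenius[OF p] unfolding G_def by blast
  obtain k0 where k0: "Xm1 d = cyclotomic d * k0" using cyclotomic_props(2)[OF d] by (rule dvdE)
  define U where "U = [:0, 1:] * k0 * pderiv f"
  define V where "V = [:0, 1:] * pderiv (g * k0) - smult (int d) (g * k0)"
  have "[:int d:] = [:0, 1:] * pderiv (Xm1 d) - smult (int d) (Xm1 d)"
    using deriv_identity[OF d] by simp
  also have "\<dots> = U * g + f * V"
    unfolding k0 g U_def V_def by (simp add: pderiv_mult algebra_simps)
  finally have e1: "[:int d:] = U * g + f * V" .
  obtain w where w: "(U * g + f * V) ^ p = (U * g) ^ p + f * w" using pow_add_mult by blast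
  have "[:int d ^ p:] = [:int d:] ^ p" by (simp add: poly_const_pow)
  also have "\<dots> = U ^ p * (f * s0 + smult (int p) t) + f * w"
    unfolding e1 w power_mult_distrib t s0 ..
  also have "\<dots> = f * (w + U ^ p * s0) + smult (int p) (U ^ p * t)"
    by (simp add: algebra_simps mult_smult_right)
  finally have e2: "[:int d ^ p:] = f * (w + U ^ p * s0) + smult (int p) (U ^ p * t)" .
  have "coprime (int d ^ p) (int p)" using \<open>coprime p d\<close>
    by (simp add: coprime_commute)
  then have gcd1: "gcd (int d ^ p) (int p) = 1" by simp
  obtain e l where el: "bezout_coefficients (int d ^ p) (int p) = (e, l)" by fastforce
  have bez: "e * int d ^ p + l * int p = 1" using bezout_coefficients[OF el] gcd1 by simp
  have "(1 :: int poly) = smult e [:int d ^ p:] + smult (int p) [:l:]"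
    using bez by (simp add: algebra_simps)
  also have "\<dots> = f * smult e (w + U ^ p * s0) + smult (int p) (smult e (U ^ p * t) + [:l:])"
    unfolding e2 by (simp add: algebra_simps smult_add_right mult_smult_right)
  finally have "f * smult e (w + U ^ p * s0) + smult (int p) (smult e (U ^ p * t) + [:l:]) = 1" by simp
  moreover have "int p \<ge> 2" using p prime_ge_2_nat by fastforce
  ultimately show False using no_unit_mod_p[OF lf minprop_degree[OF mf]] by blast
qed

lemma all_roots:
  assumes d: "d > 0" and mf: "minprop d 1 f"
  shows "k > 0 \<Longrightarrow> coprime k d \<Longrightarrow> poly (ip f) (zeta d k) = 0"
proof (induction k rule: less_induct)
  case (less k)
  show ?case
  proof (cases "k = 1")
    case True then show ?thesis using mf unfolding minprop_def by simp
  next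
    case False
    then obtain p where p: "prime p" "p dvd k" using prime_factor_nat by blast
    then obtain k' where k': "k = p * k'" by (elim dvdE)
    have k'0: "k' > 0" using less.prems k' by simp
    have "p > 1" using p(1) prime_gt_1_nat by blast
    then have "k' < k" using k' k'0 by simp
    have ck': "coprime k' d" using less.prems(2) k' by simp
    have pd: "\<not> p dvd d"
    proof
      assume "p dvd d"
      then have "is_unit p" by (rule coprime_common_divisor[OF less.prems(2) p(2)])
      then show False using p(1) by (simp add: not_prime_unit)
    qed
    have r': "poly (ip f) (zeta d k') = 0" using less.IH[OF \<open>k' < k\<close> k'0 ck'] .
    obtain f' where mf': "minprop d k' f'" using min_poly_exists[OF d ck'] by blast
    then have "f' dvd f" using r' unfolding minprop_def by blast
    then obtain r where r: "f = f' * r" by (rule dvdE)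
    have "poly (ip f') (zeta d (k' * p)) = 0" by (rule frob_root[OF d ck' p(1) pd mf'])
    then show ?thesis unfolding r k' by (simp add: mult.commute)
  qed
qed

theorem cyclotomic_irreducible:
  assumes d: "d > 0" and h: "poly (ip h) (zeta d 1) = 0"
  shows "cyclotomic d dvd h"
proof -
  obtain f where mf: "minprop d 1 f" using min_poly_exists[OF d coprime_1_left] by blast
  have lf: "lead_coeff f = 1" using mf unfolding minprop_def by simp
  define K where "K = {k\<in>{1..d}. coprime k d}"
  have inj: "inj_on (zeta d) K" using zeta_inj_1d[OF d] unfolding K_def by (rule inj_on_subset) auto
  have "(\<Prod>a\<in>zeta d ` K. [:-a, 1:]) dvd ip f"
    by (rule prod_roots_dvd) (use all_roots[OF d mf] in \<open>auto simp: K_def\<close>)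
  moreover have "(\<Prod>a\<in>zeta d ` K. [:-a, 1:]) = cyclotomic_C d"
    unfolding cycC_zeta K_def[symmetric] using prod.reindex[OF inj, of "\<lambda>a. [:-a, 1:]"] by simp
  ultimately have dv: "ip (cyclotomic d) dvd ip f" using cyclotomic_ip[OF d] by simp
  have "ip f \<noteq> 0" using lf by auto
  have "degree (ip (cyclotomic d)) \<le> degree (ip f)" by (rule dvd_imp_degree_le[OF dv]) fact
  then have dg: "degree (cyclotomic d) \<le> degree f" by (simp only: degree_ip)
  have fd: "f dvd cyclotomic d" using mf cyclotomic_root[OF d, of 1] unfolding minprop_def by simp
  have "cyclotomic d \<noteq> 0" using cyclotomic_props(1)[OF d] by auto
  then have "degree f \<le> degree (cyclotomic d)" by (rule dvd_imp_degree_le[OF fd])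
  then have "f = cyclotomic d"
    using monic_dvd_eq[OF fd lf cyclotomic_props(1)[OF d]] dg by simp
  then show ?thesis using mf h unfolding minprop_def by blast
qed


abbreviation PhiD :: "'d itself \<Rightarrow> int poly" where "PhiD _ \<equiv> cyclotomic CARD('d)"

lemma abs_cyc_eq0: "(abs_cyc p :: 'd cyc) = 0 \<longleftrightarrow> cyclotomic CARD('d) dvd p"
  by (simp add: zero_cyc.abs_eq cyc.abs_eq_iff cyc_rel_def)

lemma abs_cyc_eq: "(abs_cyc p :: 'd cyc) = abs_cyc r \<longleftrightarrow> cyclotomic CARD('d) dvd p - r"
  by (simp add: cyc.abs_eq_iff cyc_rel_def)

lemma abs_cyc_add: "abs_cyc (p + r) = abs_cyc p + abs_cyc r" by (simp add: plus_cyc.abs_eq)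
lemma abs_cyc_mult: "abs_cyc (p * r) = abs_cyc p * abs_cyc r" by (simp add: times_cyc.abs_eq)
lemma abs_cyc_diff: "abs_cyc (p - r) = abs_cyc p - abs_cyc r" by (simp add: minus_cyc.abs_eq)
lemma abs_cyc_uminus: "abs_cyc (- p) = - abs_cyc p" by (simp add: uminus_cyc.abs_eq)
lemma abs_cyc_one: "abs_cyc 1 = 1" by (simp add: one_cyc.abs_eq)
lemma abs_cyc_zero: "abs_cyc 0 = 0" by (simp add: zero_cyc.abs_eq)
lemma abs_cyc_pow: "abs_cyc (p ^ n) = abs_cyc p ^ n"
  by (induction n) (simp_all add: abs_cyc_one abs_cyc_mult)

lemma abs_cyc_surj: "\<exists>p. a = abs_cyc p"
  by (induction a rule: cyc.abs_induct) blast

lemma cyc_q_pow: "(cyc_q :: 'd cyc) ^ m = abs_cyc (monom 1 m)"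
  by (simp add: cyc_q.abs_eq abs_cyc_pow monom_altdef)

context
  assumes d0: "CARD('d) > 0"
begin

lemma q_pow_d: "(cyc_q :: 'd cyc) ^ CARD('d) = 1"
proof -
  have "cyclotomic CARD('d) dvd monom 1 CARD('d) - 1"
    using cyclotomic_props(2)[OF d0] unfolding Xm1_def .
  then show ?thesis unfolding cyc_q_pow abs_cyc_one[symmetric] abs_cyc_eq .
qed

lemma cyc_one_neq_zero: "(1 :: 'd cyc) \<noteq> 0"
proof
  assume "(1 :: 'd cyc) = 0"
  then have "cyclotomic CARD('d) dvd 1" unfolding abs_cyc_one[symmetric] abs_cyc_eq0 .
  then have "degree (cyclotomic CARD('d)) \<le> degree (1::int poly)" by (rule dvd_imp_degree_le) simp
  then show False using cyclotomic_degree(2)[OF d0] by simp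
qed

lemma root1: "poly (ip (cyclotomic CARD('d))) (zeta CARD('d) 1) = 0"
  using cyclotomic_root[OF d0] by simp

lemma cyc_cancel:
  assumes nd: "\<not> CARD('d) dvd m" and eq: "((cyc_q :: 'd cyc) ^ m - 1) * a = 0"
  shows "a = 0"
proof -
  obtain p where p: "a = abs_cyc p" using abs_cyc_surj by blast
  have "abs_cyc ((monom 1 m - 1) * p) = (0 :: 'd cyc)"
    using eq unfolding p cyc_q_pow abs_cyc_mult abs_cyc_diff abs_cyc_one by simp
  then have "cyclotomic CARD('d) dvd (monom 1 m - 1) * p" by (simp only: abs_cyc_eq0)
  then obtain r where r: "(monom 1 m - 1) * p = cyclotomic CARD('d) * r" by (rule dvdE)
  have "poly (ip ((monom 1 m - 1) * p)) (zeta CARD('d) 1) = 0" unfolding r using root1 by simp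
  then have "(zeta CARD('d) 1 ^ m - 1) * poly (ip p) (zeta CARD('d) 1) = 0"
    by (simp add: poly_monom)
  moreover have "zeta CARD('d) 1 ^ m \<noteq> 1" using nd zeta_eq_1_iff[OF d0] by (simp add: zeta_pow)
  ultimately have "poly (ip p) (zeta CARD('d) 1) = 0" by simp
  then have "cyclotomic CARD('d) dvd p" by (rule cyclotomic_irreducible[OF d0])
  then show "a = 0" unfolding p by (simp only: abs_cyc_eq0)
qed

lemma cyc_bezout:
  fixes a :: "int poly"
  assumes na: "\<not> cyclotomic CARD('d) dvd a"
  shows "\<exists>N u v. N > 0 \<and> [:N:] = a * u + cyclotomic CARD('d) * v"
proof -
  define \<Phi> where "\<Phi> = cyclotomic CARD('d)"
  have lP: "lead_coeff \<Phi> = 1" unfolding \<Phi>_def by (rule cyclotomic_props(1)[OF d0])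
  have P0: "\<Phi> \<noteq> 0" using lP by auto
  define I where "I h \<longleftrightarrow> h \<noteq> 0 \<and> (\<exists>u v. h = a * u + \<Phi> * v)" for h
  have a0: "a \<noteq> 0" using na by auto
  have Ia: "I a" unfolding I_def using a0 by (intro conjI exI[of _ 1] exI[of _ 0]) auto
  obtain m0 where m0: "I m0" "\<And>h. I h \<Longrightarrow> degree m0 \<le> degree h"
    using ex_has_least_nat[of I a degree, OF Ia] by blast
  obtain u v where uv: "m0 = a * u + \<Phi> * v" using m0(1) unfolding I_def by blast
  have m00: "m0 \<noteq> 0" using m0(1) unfolding I_def by simp
  have dvd_gen: "\<exists>\<alpha>. \<alpha> \<noteq> 0 \<and> m0 dvd smult \<alpha> x" if x: "\<exists>u' v'. x = a * u' + \<Phi> * v'" for x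
  proof -
    obtain u' v' where x': "x = a * u' + \<Phi> * v'" using x by blast
    define r where "r = pseudo_mod x m0"
    obtain \<alpha> q where aq: "\<alpha> \<noteq> 0" "smult \<alpha> x = m0 * q + r"
      using pseudo_mod(1)[OF m00, of x] unfolding r_def by blast
    have rd: "r = 0 \<or> degree r < degree m0"
      using pseudo_mod(2)[OF m00, of x] unfolding r_def by blast
    have "r = a * (smult \<alpha> u' - u * q) + \<Phi> * (smult \<alpha> v' - v * q)"
    proof -
      have "r = smult \<alpha> x - m0 * q" using aq by simp
      then show ?thesis unfolding x' uv by (simp add: algebra_simps smult_add_right mult_smult_right)
    qed
    then have "r = 0 \<or> I r" unfolding I_def by blast
    then have "r = 0" using rd m0(2) by (meson not_le)
    then show ?thesis using aq by auto
  qed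
  show ?thesis
  proof (cases "degree m0 = 0")
    case True
    then obtain N0 where N0: "m0 = [:N0:]" by (metis degree_eq_zeroE)
    have "N0 \<noteq> 0" using m00 N0 by simp
    show ?thesis
    proof (cases "N0 > 0")
      case True then show ?thesis using N0 uv unfolding \<Phi>_def by metis
    next
      case False
      then have "- N0 > 0" using \<open>N0 \<noteq> 0\<close> by simp
      moreover have "[:- N0:] = a * (- u) + \<Phi> * (- v)"
        using arg_cong[OF trans[OF uv[symmetric] N0], of uminus] by (simp add: algebra_simps)
      ultimately show ?thesis unfolding \<Phi>_def by blast
    qed
  next
    case False
    have "\<exists>u' v'. \<Phi> = a * u' + \<Phi> * v'" by (intro exI[of _ 0] exI[of _ 1]) simp
    then obtain \<alpha> where al: "\<alpha> \<noteq> 0" "m0 dvd smult \<alpha> \<Phi>" using dvd_gen by blast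
    have "\<exists>u' v'. a = a * u' + \<Phi> * v'" by (intro exI[of _ 1] exI[of _ 0]) simp
    then obtain \<beta> where be: "\<beta> \<noteq> 0" "m0 dvd smult \<beta> a" using dvd_gen by blast
    define m' where "m' = primitive_part m0"
    have c1: "content m' = 1" unfolding m'_def using m00 by simp
    have dm': "degree m' > 0" unfolding m'_def using False by simp
    have "m0 = m' * [:content m0:]" unfolding m'_def
      using content_times_primitive_part[of m0] by simp
    then have "m' dvd m0" by (rule dvdI)
    then have m'P: "m' dvd \<Phi>" and m'a: "m' dvd a"
      using primitive_dvd_smult[OF c1] al be dvd_trans by blast+
    obtain K where K: "\<Phi> = m' * K" using m'P by (rule dvdE)
    have "poly (ip m') (zeta CARD('d) 1) * poly (ip K) (zeta CARD('d) 1) = 0"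
      using root1 unfolding \<Phi>_def[symmetric] K by simp
    then show ?thesis
    proof (cases "poly (ip m') (zeta CARD('d) 1) = 0")
      case True
      then have "\<Phi> dvd m'" unfolding \<Phi>_def by (rule cyclotomic_irreducible[OF d0])
      then have "\<Phi> dvd a" using m'a dvd_trans by blast
      then show ?thesis using na unfolding \<Phi>_def by simp
    next
      case False
      then have "poly (ip K) (zeta CARD('d) 1) = 0"
        using \<open>poly (ip m') _ * poly (ip K) _ = 0\<close> by simp
      then have "\<Phi> dvd K" unfolding \<Phi>_def by (rule cyclotomic_irreducible[OF d0])
      then obtain L where L: "K = \<Phi> * L" by (rule dvdE)
      have "\<Phi> * 1 = \<Phi> * (m' * L)" using K L by (simp add: algebra_simps)
      then have "m' * L = 1" using P0 by (simp only: mult_cancel_left) simp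
      then have "degree (m' * L) = 0" by simp
      moreover have "L \<noteq> 0" using \<open>m' * L = 1\<close> by auto
      moreover have "m' \<noteq> 0" using dm' by auto
      ultimately have "degree m' + degree L = 0" using degree_mult_eq[of m' L] by simp
      then show ?thesis using dm' by simp
    qed
  qed
qed

end


definition ee :: "nat \<Rightarrow> 'a::zero \<Rightarrow> nat \<Rightarrow> 'a" where
  "ee j c = (\<lambda>k. if k = j then c else 0)"

definition phi :: "'a::comm_ring \<Rightarrow> (nat \<Rightarrow> 'a) \<Rightarrow> nat \<Rightarrow> 'a" where
  "phi q v j = - q * v j + q * v (j - 1) + v (j + 1) - v j"

definition closedW :: "nat \<Rightarrow> 'a::comm_ring \<Rightarrow> (nat \<Rightarrow> 'a) set \<Rightarrow> bool" where
  "closedW n q W \<longleftrightarrow> (\<forall>v\<in>W. \<forall>w\<in>W. v + w \<in> W) \<and> (\<forall>v\<in>W. - v \<in> W) \<and>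
     (\<forall>j\<in>{1..n}. \<forall>v\<in>W. burau_T q j v \<in> W)"

lemma stable_T:
  assumes "stable (burau_image q n) W" "j \<in> {1..n}" "v \<in> W"
  shows "burau_T q j v \<in> W"
proof -
  have "burau_T q j \<circ> id \<in> burau_image q n" using assms(2) by (intro burau_image.gen burau_image.id)
  then show ?thesis using assms(1,3) unfolding stable_def by fastforce
qed

context
  fixes n :: nat and q :: "'a::{comm_ring, comm_monoid_mult}" and W :: "(nat \<Rightarrow> 'a) set"
  assumes cl: "closedW n q W"
begin

lemma cl_add: "v \<in> W \<Longrightarrow> w \<in> W \<Longrightarrow> v + w \<in> W" using cl unfolding closedW_def by blast
lemma cl_neg: "v \<in> W \<Longrightarrow> - v \<in> W" using cl unfolding closedW_def by blast
lemma cl_T: "j \<in> {1..n} \<Longrightarrow> v \<in> W \<Longrightarrow> burau_T q j v \<in> W" using cl unfolding closedW_def by blast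

lemma G_diff: assumes "v \<in> W" "j \<in> {1..n}" shows "ee j (phi q v j) \<in> W"
proof -
  have "burau_T q j v + (- v) = ee j (phi q v j)"
    by (rule ext) (simp add: burau_T_def ee_def phi_def)
  then show ?thesis using cl_add[OF cl_T[OF assms(2,1)] cl_neg[OF assms(1)]] by simp
qed

lemma G_mult: assumes "j \<in> {1..n}" "ee j c \<in> W" shows "ee j (q * c) \<in> W"
proof -
  have "- burau_T q j (ee j c) = ee j (q * c)"
    using assms(1) by (intro ext) (auto simp: burau_T_def ee_def)
  then show ?thesis using cl_neg[OF cl_T[OF assms]] by simp
qed

lemma G_up: assumes "j \<ge> 1" "j + 1 \<le> n" "ee j c \<in> W" shows "ee (j + 1) (q * c) \<in> W"
proof -
  have j: "j + 1 \<in> {1..n}" using assms by auto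
  have "burau_T q (j + 1) (ee j c) + - ee j c = ee (j + 1) (q * c)"
    by (intro ext) (auto simp: burau_T_def ee_def)
  then show ?thesis using cl_add[OF cl_T[OF j assms(3)] cl_neg[OF assms(3)]] by simp
qed

lemma G_down: assumes "j \<ge> 2" "j \<le> n" "ee j c \<in> W" shows "ee (j - 1) c \<in> W"
proof -
  have j: "j - 1 \<in> {1..n}" using assms by auto
  have "burau_T q (j - 1) (ee j c) + - ee j c = ee (j - 1) c"
    using assms(1) by (intro ext) (auto simp: burau_T_def ee_def)
  then show ?thesis using cl_add[OF cl_T[OF j assms(3)] cl_neg[OF assms(3)]] by simp
qed

lemma G_pow: assumes "j \<in> {1..n}" "ee j c \<in> W" shows "ee j (q ^ i * c) \<in> W"
proof (induction i)
  case 0 then show ?case using assms by simp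
next
  case (Suc i)
  then have "ee j (q * (q ^ i * c)) \<in> W" by (rule G_mult[OF assms(1)])
  then show ?case by (simp add: mult.assoc)
qed

lemma G_spread:
  assumes qD: "q ^ D = 1" and D0: "D > 0" and j: "j \<in> {1..n}" and c: "ee j c \<in> W"
  shows "k \<in> {1..n} \<Longrightarrow> ee k c \<in> W"
proof -
  have up: "j + i \<le> n \<Longrightarrow> ee (j + i) c \<in> W" for i
  proof (induction i)
    case 0 then show ?case using c by simp
  next
    case (Suc i)
    then have "ee (j + i + 1) (q * c) \<in> W" using j by (intro G_up) auto
    then have "ee (j + i + 1) (q ^ (D - 1) * (q * c)) \<in> W" using Suc.prems
      by (intro G_pow) auto
    moreover have "q ^ (D - 1) * (q * c) = c"
    proof -
      have "q ^ (D - 1) * (q * c) = q ^ Suc (D - 1) * c" by (simp add: mult.assoc mult.commute)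
      also have "Suc (D - 1) = D" using D0 by simp
      finally show ?thesis using qD by simp
    qed
    ultimately show ?case by simp
  qed
  have down: "i < j \<Longrightarrow> ee (j - i) c \<in> W" for i
  proof (induction i)
    case 0 then show ?case using c by simp
  next
    case (Suc i)
    then have "ee (j - i) c \<in> W" by simp
    then have "ee (j - i - 1) c \<in> W" using Suc.prems j by (intro G_down) auto
    then show ?case by simp
  qed
  assume k: "k \<in> {1..n}"
  show "ee k c \<in> W"
  proof (cases "j \<le> k")
    case True then show ?thesis using up[of "k - j"] k by simp
  next
    case False then show ?thesis using down[of "j - k"] k by simp
  qed
qed

lemma G_sum:
  assumes z: "0 \<in> W" and f: "\<And>k. k \<in> {1..n} \<Longrightarrow> ee k (f k) \<in> W"
  shows "(\<lambda>k. if k \<in> {1..n} then f k else 0) \<in> W"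
proof -
  have "m \<le> n \<Longrightarrow> (\<lambda>k. if 1 \<le> k \<and> k \<le> m then f k else 0) \<in> W" for m
  proof (induction m)
    case 0
    have "(\<lambda>k::nat. if 1 \<le> k \<and> k \<le> 0 then f k else 0) = 0" by (rule ext) auto
    then show ?case using z by simp
  next
    case (Suc m)
    have "(\<lambda>k. if 1 \<le> k \<and> k \<le> Suc m then f k else 0)
        = (\<lambda>k. if 1 \<le> k \<and> k \<le> m then f k else 0) + ee (Suc m) (f (Suc m))"
      by (rule ext) (auto simp: ee_def)
    then show ?case using cl_add[OF Suc.IH f[of "Suc m"]] Suc.prems by simp
  qed
  from this[of n] show ?thesis by simp
qed

end

lemma geom_sum_mult:
  fixes q :: "'a::{comm_ring, comm_monoid_mult}"
  shows "(q - 1) * (\<Sum>k<m. q ^ k) = q ^ m - 1"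
  by (induction m) (simp_all add: algebra_simps)

lemma G_recur:
  fixes q :: "'a::{comm_ring, comm_monoid_mult}"
  assumes v: "v \<in> vecs n" and ph: "\<forall>j\<in>{1..n}. phi q v j = 0"
  shows "(q ^ Suc n - 1) * v 1 = 0" and "v 1 = 0 \<Longrightarrow> v = 0"
proof -
  have v0: "v k = 0" if "k \<notin> {1..n}" for k using v that unfolding vecs_def by blast
  have D: "k \<le> n \<Longrightarrow> v (Suc k) - v k = q ^ k * v 1" for k
  proof (induction k)
    case 0 then show ?case using v0[of 0] by simp
  next
    case (Suc k)
    have "phi q v (Suc k) = 0" using ph Suc.prems by auto
    then have "v (Suc (Suc k)) - v (Suc k) = q * (v (Suc k) - v k)"
      unfolding phi_def by (simp add: algebra_simps)
    also have "\<dots> = q ^ Suc k * v 1" using Suc by (simp add: mult.assoc)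
    finally show ?case .
  qed
  have "(\<Sum>k<Suc n. v (Suc k) - v k) = v (Suc n) - v 0" by (rule sum_lessThan_telescope)
  also have "\<dots> = 0" using v0[of 0] v0[of "Suc n"] by simp
  finally have "(\<Sum>k<Suc n. q ^ k * v 1) = 0" using D by simp
  then have "(\<Sum>k<Suc n. q ^ k) * v 1 = 0" by (simp only: sum_distrib_right)
  then have "(q - 1) * ((\<Sum>k<Suc n. q ^ k) * v 1) = 0" by simp
  then have "((q - 1) * (\<Sum>k<Suc n. q ^ k)) * v 1 = 0" by (simp only: mult.assoc)
  then show "(q ^ Suc n - 1) * v 1 = 0" by (simp only: geom_sum_mult)
  assume v1: "v 1 = 0"
  have "k \<le> Suc n \<Longrightarrow> v k = 0" for k
  proof (induction k)
    case 0 then show ?case using v0[of 0] by simp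
  next
    case (Suc k) then show ?case using D[of k] v1 by simp
  qed
  then show "v = 0" using v0 by (intro ext) (metis atLeastAtMost_iff le_SucI zero_fun_def)
qed


lemma coset_shift:
  fixes r x :: "'a::ab_group_add"
  assumes add: "\<forall>v\<in>W. \<forall>w\<in>W. v + w \<in> W" and neg: "\<forall>v\<in>W. - v \<in> W" and x: "x \<in> W"
  shows "(+) (r + x) ` W = (+) r ` W"
proof (intro equalityI subsetI)
  fix y assume "y \<in> (+) (r + x) ` W"
  then obtain w where w: "w \<in> W" "y = r + x + w" by blast
  then have "y = r + (x + w)" by (simp add: add.assoc)
  then show "y \<in> (+) r ` W" using add x w(1) by blast
next
  fix y assume "y \<in> (+) r ` W"
  then obtain w where w: "w \<in> W" "y = r + w" by blast
  then have "y = (r + x) + (- x + w)" by (simp add: algebra_simps)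
  moreover have "- x + w \<in> W" using add neg x w(1) by blast
  ultimately show "y \<in> (+) (r + x) ` W" by blast
qed

lemma cyc_reduce:
  assumes d0: "CARD('d) > 0" and N: "N > 0"
  defines "RN \<equiv> Poly ` {xs. set xs \<subseteq> {0..<N} \<and> length xs = degree (cyclotomic CARD('d))}"
  shows "\<exists>r\<in>RN. \<exists>b. (x :: 'd cyc) = abs_cyc r + abs_cyc [:N:] * b"
proof -
  define D where "D = degree (cyclotomic CARD('d))"
  obtain p where p: "x = abs_cyc p" using abs_cyc_surj by blast
  obtain s r0 where sr: "p = cyclotomic CARD('d) * s + r0" "r0 = 0 \<or> degree r0 < D"
    using monic_div[OF cyclotomic_props(1)[OF d0]] unfolding D_def by blast
  have "(abs_cyc (cyclotomic CARD('d) * s) :: 'd cyc) = 0" by (simp only: abs_cyc_eq0) simp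
  then have xr: "x = abs_cyc r0" unfolding p sr(1) abs_cyc_add by simp
  define xs where "xs = map (\<lambda>i. coeff r0 i mod N) [0..<D]"
  define ys where "ys = map (\<lambda>i. coeff r0 i div N) [0..<D]"
  have c0: "coeff r0 i = 0" if "i \<ge> D" for i
    using sr(2) that by (auto simp: coeff_eq_0)
  have "r0 = Poly xs + smult N (Poly ys)"
  proof (rule poly_eqI)
    fix i show "coeff r0 i = coeff (Poly xs + smult N (Poly ys)) i"
      by (cases "i < D") (auto simp: xs_def ys_def nth_default_def c0)
  qed
  then have "x = abs_cyc (Poly xs) + abs_cyc [:N:] * abs_cyc (Poly ys)"
    unfolding xr by (simp add: abs_cyc_add abs_cyc_mult[symmetric])
  moreover have "Poly xs \<in> RN" unfolding RN_def D_def[symmetric] xs_def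
    by (rule imageI) (use N in auto)
  ultimately show ?thesis by blast
qed

lemma cosets_finite:
  fixes W :: "(nat \<Rightarrow> 'd cyc) set"
  assumes d0: "CARD('d) > 0" and N: "N > 0" and W: "add_subgroup n W"
    and NW: "\<forall>v\<in>vecs n. (\<lambda>k. abs_cyc [:N:] * v k) \<in> W"
  shows "finite {(+) v ` W | v. v \<in> vecs n}"
proof -
  define RN where "RN = Poly ` {xs. set xs \<subseteq> {0..<N} \<and> length xs = degree (cyclotomic CARD('d))}"
  have finRN: "finite RN" unfolding RN_def by (intro finite_imageI finite_lists_length_eq) simp
  have "\<forall>x::'d cyc. \<exists>rb. fst rb \<in> RN \<and> x = abs_cyc (fst rb) + abs_cyc [:N:] * snd rb"
    using cyc_reduce[OF d0 N] unfolding RN_def by fastforce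
  then obtain RB where RB: "\<And>x::'d cyc. fst (RB x) \<in> RN \<and> x = abs_cyc (fst (RB x)) + abs_cyc [:N:] * snd (RB x)"
    by metis
  define VR where "VR = (\<lambda>\<phi>. \<lambda>k. if k \<in> {1..n} then (abs_cyc (\<phi> k) :: 'd cyc) else 0) ` (PiE {1..n} (\<lambda>_. RN))"
  have finVR: "finite VR" unfolding VR_def using finRN by (intro finite_imageI finite_PiE) auto
  have add: "\<forall>v\<in>W. \<forall>w\<in>W. v + w \<in> W" and neg: "\<forall>v\<in>W. - v \<in> W"
    using W unfolding add_subgroup_def by auto
  have "{(+) v ` W | v. v \<in> vecs n} \<subseteq> (\<lambda>r. (+) r ` W) ` VR"
  proof
    fix C assume "C \<in> {(+) v ` W | v. v \<in> vecs n}"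
    then obtain v where v: "v \<in> vecs n" "C = (+) v ` W" by blast
    define rv where "rv = (\<lambda>k. if k \<in> {1..n} then abs_cyc (fst (RB (v k))) else (0::'d cyc))"
    define bv where "bv = (\<lambda>k. if k \<in> {1..n} then snd (RB (v k)) else (0::'d cyc))"
    have bv: "bv \<in> vecs n" unfolding vecs_def bv_def by auto
    have v0: "v k = 0" if "k \<notin> {1..n}" for k using v(1) that unfolding vecs_def by blast
    have "v = rv + (\<lambda>k. abs_cyc [:N:] * bv k)"
    proof (rule ext)
      fix k show "v k = (rv + (\<lambda>k. abs_cyc [:N:] * bv k)) k"
        using RB[of "v k"] v0[of k] by (auto simp: rv_def bv_def)
    qed
    moreover have "(\<lambda>k. abs_cyc [:N:] * bv k) \<in> W" using NW bv by blast
    ultimately have "C = (+) rv ` W" unfolding v(2) using coset_shift[OF add neg] by metis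
    moreover have "rv \<in> VR" unfolding VR_def rv_def
      by (rule image_eqI[of _ _ "restrict (\<lambda>k. fst (RB (v k))) {1..n}"]) (auto simp: RB)
    ultimately show "C \<in> (\<lambda>r. (+) r ` W) ` VR" by blast
  qed
  then show ?thesis using finVR by (rule finite_subset[OF _ finite_imageI])
qed


lemma ee_add: "ee k (x + y) = ee k x + ee k (y::'a::monoid_add)" by (rule ext) (simp add: ee_def)
lemma ee_neg: "ee k (- x) = - ee k (x::'a::ab_group_add)" by (rule ext) (simp add: ee_def)
lemma ee_zero: "ee k 0 = 0" by (rule ext) (simp add: ee_def)

lemma part_a_span:
  fixes W :: "(nat \<Rightarrow> 'd cyc) set" and c :: "'d cyc"
  assumes cl: "closedW n cyc_q W" and z: "0 \<in> W" and k: "k \<in> {1..n}" and c: "ee k c \<in> W"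
  shows "ee k (c * x) \<in> W"
proof -
  define S where "S = {x. ee k (c * x) \<in> W}"
  have S0: "0 \<in> S" unfolding S_def using z by (simp add: ee_zero)
  have Sadd: "x + y \<in> S" if "x \<in> S" "y \<in> S" for x y
    using that cl_add[OF cl] unfolding S_def by (simp add: distrib_left ee_add)
  have Sneg: "- x \<in> S" if "x \<in> S" for x
    using that cl_neg[OF cl] unfolding S_def by (simp add: ee_neg)
  have Sq: "cyc_q * x \<in> S" if "x \<in> S" for x
  proof -
    have "ee k (cyc_q * (c * x)) \<in> W" using that G_mult[OF cl k] unfolding S_def by blast
    then show ?thesis unfolding S_def by (simp add: mult.left_commute)
  qed
  have S1: "1 \<in> S" unfolding S_def using c by simp
  have Snat: "abs_cyc [:int m:] \<in> S" for m
  proof (induction m)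
    case 0 then show ?case using S0 by (simp add: abs_cyc_zero)
  next
    case (Suc m)
    have "abs_cyc [:int (Suc m):] = abs_cyc [:int m:] + (1 :: 'd cyc)"
      by (simp add: abs_cyc_add[symmetric] abs_cyc_one[symmetric] one_pCons add.commute)
    then show ?case using Sadd[OF Suc S1] by simp
  qed
  have Sint: "abs_cyc [:a:] \<in> S" for a
  proof (cases "a \<ge> 0")
    case True then show ?thesis using Snat[of "nat a"] by simp
  next
    case False
    then have "[:a:] = - [:int (nat (- a)):]" by simp
    then have "abs_cyc [:a:] = - (abs_cyc [:int (nat (- a)):] :: 'd cyc)"
      by (metis abs_cyc_uminus)
    moreover have "- (abs_cyc [:int (nat (- a)):] :: 'd cyc) \<in> S" by (rule Sneg[OF Snat])
    ultimately show ?thesis by (simp only:)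
  qed
  have "abs_cyc p \<in> S" for p
  proof (induction p)
    case 0 then show ?case using S0 by (simp add: abs_cyc_zero)
  next
    case (pCons a p)
    have eq: "pCons a p = [:a:] + [:0, 1:] * p" by (simp add: mult_pCons_left)
    have "abs_cyc (pCons a p) = abs_cyc [:a:] + cyc_q * (abs_cyc p :: 'd cyc)"
      unfolding eq by (simp only: abs_cyc_add abs_cyc_mult cyc_q.abs_eq)
    then show ?case using Sadd[OF Sint Sq[OF pCons.IH]] by simp
  qed
  then show ?thesis using abs_cyc_surj[of x] unfolding S_def by blast
qed

lemma nonzero_in:
  assumes "0 \<in> W" "W \<noteq> {0}" shows "\<exists>w\<in>W. w \<noteq> 0"
  using assms by blast

theorem lemma4p3:
  fixes n :: nat
  assumes d3: "CARD('d) \<ge> 3"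
    and n_cong: "\<not> [int n = -1] (mod int CARD('d))"
  shows
    "(\<forall>W :: (nat \<Rightarrow> 'd cyc) set.
        add_subgroup n W \<and> W \<noteq> {0} \<and> stable (burau_image cyc_q n) W \<longrightarrow>
          (\<exists>c::'d cyc. c \<noteq> 0 \<and> {(\<lambda>k. c * v k) | v. v \<in> vecs n} \<subseteq> W)
          \<and> finite {(+) v ` W | v. v \<in> vecs n})
     \<and>
     (\<forall>(\<iota> :: 'd cyc \<Rightarrow> 'f::field) (W :: (nat \<Rightarrow> 'f) set).
        inj \<iota> \<and> \<iota> 1 = 1 \<and> (\<forall>a b. \<iota> (a + b) = \<iota> a + \<iota> b) \<and> (\<forall>a b. \<iota> (a * b) = \<iota> a * \<iota> b) \<and>
        subspace_vecs n W \<and> W \<noteq> {0} \<and> stable (burau_image (\<iota> cyc_q) n) W \<longrightarrow>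
          W = vecs n)"
proof -
  define D where "D = CARD('d)"
  have d0: "CARD('d) > 0" using d3 by simp
  have nd: "\<not> CARD('d) dvd Suc n"
  proof
    assume "CARD('d) dvd Suc n"
    then have "int CARD('d) dvd int (Suc n)" by (simp only: of_nat_dvd_iff)
    moreover have "int (Suc n) = int n - (-1)" by simp
    ultimately have "int CARD('d) dvd int n - (-1)" by (simp only:)
    then show False using n_cong by (simp add: cong_iff_dvd_diff)
  qed
  have partA: "(\<exists>c::'d cyc. c \<noteq> 0 \<and> {(\<lambda>k. c * v k) | v. v \<in> vecs n} \<subseteq> W)
          \<and> finite {(+) v ` W | v. v \<in> vecs n}"
    if W: "add_subgroup n W" "W \<noteq> {0}" "stable (burau_image cyc_q n) W" for W :: "(nat \<Rightarrow> 'd cyc) set"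
  proof -
    have sub: "W \<subseteq> vecs n" and z: "0 \<in> W" and add: "\<forall>v\<in>W. \<forall>w\<in>W. v + w \<in> W"
      and neg: "\<forall>v\<in>W. - v \<in> W" using W(1) unfolding add_subgroup_def by auto
    have cl: "closedW n cyc_q W" unfolding closedW_def using add neg stable_T[OF W(3)] by blast
    obtain w where w: "w \<in> W" "w \<noteq> 0" using nonzero_in[OF z W(2)] by blast
    have wv: "w \<in> vecs n" using w sub by blast
    show ?thesis
    proof (cases "\<exists>j\<in>{1..n}. phi cyc_q w j \<noteq> 0")
      case True
      then obtain j where j: "j \<in> {1..n}" "phi cyc_q w j \<noteq> 0" by blast
      define c where "c = phi cyc_q w j"
      have cj: "ee j c \<in> W" unfolding c_def by (rule G_diff[OF cl w(1) j(1)])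
      have ck: "ee k c \<in> W" if "k \<in> {1..n}" for k
        by (rule G_spread[OF cl q_pow_d[OF d0] d0 j(1) cj that])
      have span: "ee k (c * x) \<in> W" if "k \<in> {1..n}" for k x
        by (rule part_a_span[OF cl z that ck[OF that]])
      have all: "(\<lambda>k. c * v k) \<in> W" if v: "v \<in> vecs n" for v
      proof -
        have "(\<lambda>k. if k \<in> {1..n} then c * v k else 0) \<in> W"
          by (rule G_sum[OF cl z]) (rule span)
        moreover have "(\<lambda>k. if k \<in> {1..n} then c * v k else 0) = (\<lambda>k. c * v k)"
          using v unfolding vecs_def by (intro ext) auto
        ultimately show ?thesis by simp
      qed
      have c0: "c \<noteq> 0" using j(2) unfolding c_def .
      obtain a where a: "c = abs_cyc a" using abs_cyc_surj by blast
      have na: "\<not> cyclotomic CARD('d) dvd a" using c0 unfolding a by (simp add: abs_cyc_eq0)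
      obtain N u v where Nuv: "N > 0" "[:N:] = a * u + cyclotomic CARD('d) * v"
        using cyc_bezout[OF d0 na] by blast
      have "(abs_cyc (cyclotomic CARD('d) * v) :: 'd cyc) = 0" by (simp only: abs_cyc_eq0) simp
      then have Nc: "(abs_cyc [:N:] :: 'd cyc) = c * abs_cyc u"
        unfolding Nuv(2) a by (simp add: abs_cyc_add abs_cyc_mult)
      have NW: "\<forall>x\<in>vecs n. (\<lambda>k. abs_cyc [:N:] * x k) \<in> W"
      proof
        fix x :: "nat \<Rightarrow> 'd cyc" assume x: "x \<in> vecs n"
        have "(\<lambda>k. abs_cyc u * x k) \<in> vecs n" using x unfolding vecs_def by auto
        then have "(\<lambda>k. c * (abs_cyc u * x k)) \<in> W" by (rule all)
        then show "(\<lambda>k. abs_cyc [:N:] * x k) \<in> W" unfolding Nc by (simp add: mult.assoc)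
      qed
      have "finite {(+) v ` W | v. v \<in> vecs n}" by (rule cosets_finite[OF d0 Nuv(1) W(1) NW])
      moreover have "{(\<lambda>k. c * v k) | v. v \<in> vecs n} \<subseteq> W" using all by blast
      ultimately show ?thesis using c0 by blast
    next
      case False
      then have ph: "\<forall>j\<in>{1..n}. phi cyc_q w j = 0" by blast
      have "(cyc_q ^ Suc n - 1) * w 1 = 0" by (rule G_recur(1)[OF wv ph])
      then have "w 1 = 0" by (rule cyc_cancel[OF d0 nd])
      then have "w = 0" by (rule G_recur(2)[OF wv ph])
      then show ?thesis using w(2) by simp
    qed
  qed
  have partB: "W = vecs n"
    if assm: "inj \<iota>" "\<iota> 1 = 1" "\<forall>a b. \<iota> (a + b) = \<iota> a + \<iota> b" "\<forall>a b. \<iota> (a * b) = \<iota> a * \<iota> b"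
      "subspace_vecs n W" "W \<noteq> {0}" "stable (burau_image (\<iota> cyc_q) n) W"
    for \<iota> :: "'d cyc \<Rightarrow> 'f::field" and W :: "(nat \<Rightarrow> 'f) set"
  proof -
    define Q where "Q = \<iota> cyc_q"
    have sub: "W \<subseteq> vecs n" and z: "0 \<in> W" and add: "\<forall>v\<in>W. \<forall>w\<in>W. v + w \<in> W"
      and sc: "\<forall>c. \<forall>v\<in>W. (\<lambda>k. c * v k) \<in> W" using assm(5) unfolding subspace_vecs_def by auto
    have neg: "\<forall>v\<in>W. - v \<in> W"
    proof
      fix v assume "v \<in> W"
      then have "(\<lambda>k. (-1) * v k) \<in> W" using sc by blast
      moreover have "(\<lambda>k. (-1) * v k) = - v" by (rule ext) simp
      ultimately show "- v \<in> W" by simp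
    qed
    have cl: "closedW n Q W" unfolding closedW_def Q_def using add neg stable_T[OF assm(7)] by blast
    have ipow: "\<iota> (x ^ m) = \<iota> x ^ m" for x m
      by (induction m) (simp_all add: assm(2) assm(4))
    have QD: "Q ^ CARD('d) = 1" unfolding Q_def ipow[symmetric] q_pow_d[OF d0] assm(2) ..
    have Qn: "Q ^ Suc n \<noteq> 1"
    proof
      assume "Q ^ Suc n = 1"
      then have "\<iota> (cyc_q ^ Suc n) = \<iota> 1" unfolding Q_def ipow assm(2) .
      then have "cyc_q ^ Suc n = (1 :: 'd cyc)" using assm(1) by (simp add: inj_eq)
      then have "((cyc_q :: 'd cyc) ^ Suc n - 1) * 1 = 0" by simp
      then have "(1 :: 'd cyc) = 0" by (rule cyc_cancel[OF d0 nd])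
      then show False using cyc_one_neq_zero[OF d0] by simp
    qed
    obtain w where w: "w \<in> W" "w \<noteq> 0" using nonzero_in[OF z assm(6)] by blast
    have wv: "w \<in> vecs n" using w sub by blast
    show ?thesis
    proof (cases "\<exists>j\<in>{1..n}. phi Q w j \<noteq> 0")
      case True
      then obtain j where j: "j \<in> {1..n}" "phi Q w j \<noteq> 0" by blast
      define c where "c = phi Q w j"
      have cj: "ee j c \<in> W" unfolding c_def by (rule G_diff[OF cl w(1) j(1)])
      have "(\<lambda>k. inverse c * ee j c k) \<in> W" using sc cj by blast
      moreover have "(\<lambda>k. inverse c * ee j c k) = ee j 1"
        using j(2) unfolding c_def by (intro ext) (simp add: ee_def)
      ultimately have e1: "ee j 1 \<in> W" by simp
      have ek: "ee k 1 \<in> W" if "k \<in> {1..n}" for k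
        by (rule G_spread[OF cl QD d0 j(1) e1 that])
      have "v \<in> W" if v: "v \<in> vecs n" for v
      proof -
        have "ee k (v k) \<in> W" if k: "k \<in> {1..n}" for k
        proof -
          have "(\<lambda>i. v k * ee k 1 i) \<in> W" using sc ek[OF k] by blast
          moreover have "(\<lambda>i. v k * ee k 1 i) = ee k (v k)" by (intro ext) (simp add: ee_def)
          ultimately show ?thesis by simp
        qed
        then have "(\<lambda>k. if k \<in> {1..n} then v k else 0) \<in> W" by (rule G_sum[OF cl z])
        moreover have "(\<lambda>k. if k \<in> {1..n} then v k else 0) = v"
          using v unfolding vecs_def by (intro ext) auto
        ultimately show ?thesis by simp
      qed
      then show ?thesis using sub by blast
    next
      case False
      then have ph: "\<forall>j\<in>{1..n}. phi Q w j = 0" by blast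
      have "(Q ^ Suc n - 1) * w 1 = 0" by (rule G_recur(1)[OF wv ph])
      then have "w 1 = 0" using Qn by simp
      then have "w = 0" by (rule G_recur(2)[OF wv ph])
      then show ?thesis using w(2) by simp
    qed
  qed
  show ?thesis
  proof (rule conjI; intro allI impI)
    fix W :: "(nat \<Rightarrow> 'd cyc) set"
    assume "add_subgroup n W \<and> W \<noteq> {0} \<and> stable (burau_image cyc_q n) W"
    then show "(\<exists>c::'d cyc. c \<noteq> 0 \<and> {(\<lambda>k. c * v k) | v. v \<in> vecs n} \<subseteq> W)
          \<and> finite {(+) v ` W | v. v \<in> vecs n}" using partA by blast
  next
    fix \<iota> :: "'d cyc \<Rightarrow> 'f" and W :: "(nat \<Rightarrow> 'f) set"
    assume "inj \<iota> \<and> \<iota> 1 = 1 \<and> (\<forall>a b. \<iota> (a + b) = \<iota> a + \<iota> b) \<and> (\<forall>a b. \<iota> (a * b) = \<iota> a * \<iota> b) \<and>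
        subspace_vecs n W \<and> W \<noteq> {0} \<and> stable (burau_image (\<iota> cyc_q) n) W"
    then show "W = vecs n" using partB by blast
  qed
qed


end
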